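(* Let $\Gamma$ be a distance-regular antipodal double cover with diameter $D\ge 3$ and vertex set $X$. Let $x\in X$ and let $\hat{x}$ be the antipode of $x$. Then a subspace $W\subseteq V$ is an irreducible $T(x)$-module if and only if $W$ is an irreducible $T(\hat{x})$-module.
   Context: A distance-regular graph of diameter $D$ is an antipodal double cover if for every vertex $x$ there is exactly one vertex $\hat{x}$ (the antipode of $x$) with $\partial(x,\hat{x})=D$. Let $A$ be the adjacency matrix, $V=\mathbb{C}^X$, and for $x\in X$ and $0\le i\le D$ let $E^*_i(x)$ be the diagonal matrix with $(E^*_i(x))_{yy}=1$ if $\partial(x,y)=i$ and $0$ otherwise. The Terwilliger algebra $T(x)$ is the subalgebra of $\mathrm{Mat}_X(\mathbb{C})$ generated by $A,E^*_0(x),\dots,E^*_D(x)$. A $T(x)$-module is a subspace $W\subseteq V$ with $BW\subseteq W$ for all $B\in T(x)$; it is irreducible if it is nonzero and has no $T(x)$-submodules other than $0$ and $W$. *)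

theory Defs
  imports Main "HOL.Complex"
begin

text \<open>Graphs: vertex set = the finite type 'a (so X = UNIV), adjacency relation E.\<close>

definition simple_graph :: "('a \<Rightarrow> 'a \<Rightarrow> bool) \<Rightarrow> bool" where
  "simple_graph E \<longleftrightarrow> (\<forall>x y. E x y \<longrightarrow> E y x) \<and> (\<forall>x. \<not> E x x)"

inductive walk :: "('a \<Rightarrow> 'a \<Rightarrow> bool) \<Rightarrow> nat \<Rightarrow> 'a \<Rightarrow> 'a \<Rightarrow> bool" for E where
  walk0: "walk E 0 x x"
| walkS: "E x y \<Longrightarrow> walk E n y z \<Longrightarrow> walk E (Suc n) x z"

definition connected_graph :: "('a \<Rightarrow> 'a \<Rightarrow> bool) \<Rightarrow> bool" where
  "connected_graph E \<longleftrightarrow> (\<forall>x y. \<exists>n. walk E n x y)"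

definition gdist :: "('a \<Rightarrow> 'a \<Rightarrow> bool) \<Rightarrow> 'a \<Rightarrow> 'a \<Rightarrow> nat" where
  "gdist E x y = (LEAST n. walk E n x y)"

definition diameter :: "('a::finite \<Rightarrow> 'a \<Rightarrow> bool) \<Rightarrow> nat" where
  "diameter E = Max {gdist E x y | x y. True}"

definition distance_regular :: "('a::finite \<Rightarrow> 'a \<Rightarrow> bool) \<Rightarrow> bool" where
  "distance_regular E \<longleftrightarrow> simple_graph E \<and> connected_graph E \<and>
     (\<forall>h i j x y x' y'. gdist E x y = h \<longrightarrow> gdist E x' y' = h \<longrightarrow>
        card {z. gdist E x z = i \<and> gdist E y z = j} =
        card {z. gdist E x' z = i \<and> gdist E y' z = j})"

definition antipodal_double_cover :: "('a::finite \<Rightarrow> 'a \<Rightarrow> bool) \<Rightarrow> bool" where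
  "antipodal_double_cover E \<longleftrightarrow> distance_regular E \<and>
     (\<forall>x. \<exists>!y. gdist E x y = diameter E)"

type_synonym 'a cmat = "'a \<Rightarrow> 'a \<Rightarrow> complex"

definition adj_mat :: "('a \<Rightarrow> 'a \<Rightarrow> bool) \<Rightarrow> 'a cmat" where
  "adj_mat E = (\<lambda>y z. if E y z then 1 else 0)"

definition dual_idem :: "('a \<Rightarrow> 'a \<Rightarrow> bool) \<Rightarrow> 'a \<Rightarrow> nat \<Rightarrow> 'a cmat" where
  "dual_idem E x i = (\<lambda>y z. if y = z \<and> gdist E x y = i then 1 else 0)"

definition id_mat :: "'a cmat" where
  "id_mat = (\<lambda>y z. if y = z then 1 else 0)"

definition mat_mult :: "'a::finite cmat \<Rightarrow> 'a cmat \<Rightarrow> 'a cmat" where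
  "mat_mult M N = (\<lambda>y z. \<Sum>w\<in>UNIV. M y w * N w z)"

definition mat_vec :: "'a::finite cmat \<Rightarrow> ('a \<Rightarrow> complex) \<Rightarrow> ('a \<Rightarrow> complex)" where
  "mat_vec M v = (\<lambda>y. \<Sum>z\<in>UNIV. M y z * v z)"

inductive_set terwilliger_alg :: "('a::finite \<Rightarrow> 'a \<Rightarrow> bool) \<Rightarrow> 'a \<Rightarrow> 'a cmat set"
  for E x where
  gen_A: "adj_mat E \<in> terwilliger_alg E x"
| gen_E: "i \<le> diameter E \<Longrightarrow> dual_idem E x i \<in> terwilliger_alg E x"
| gen_I: "id_mat \<in> terwilliger_alg E x"
| add: "M \<in> terwilliger_alg E x \<Longrightarrow> N \<in> terwilliger_alg E x \<Longrightarrow>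
          (\<lambda>y z. M y z + N y z) \<in> terwilliger_alg E x"
| smult: "M \<in> terwilliger_alg E x \<Longrightarrow> (\<lambda>y z. c * M y z) \<in> terwilliger_alg E x"
| mult: "M \<in> terwilliger_alg E x \<Longrightarrow> N \<in> terwilliger_alg E x \<Longrightarrow>
          mat_mult M N \<in> terwilliger_alg E x"

definition csubspace_fun :: "('a \<Rightarrow> complex) set \<Rightarrow> bool" where
  "csubspace_fun W \<longleftrightarrow> (\<lambda>_. 0) \<in> W \<and> (\<forall>v\<in>W. \<forall>w\<in>W. (\<lambda>y. v y + w y) \<in> W)
     \<and> (\<forall>c. \<forall>v\<in>W. (\<lambda>y. c * v y) \<in> W)"

definition T_module :: "('a::finite \<Rightarrow> 'a \<Rightarrow> bool) \<Rightarrow> 'a \<Rightarrow> ('a \<Rightarrow> complex) set \<Rightarrow> bool" where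
  "T_module E x W \<longleftrightarrow> csubspace_fun W \<and>
     (\<forall>B\<in>terwilliger_alg E x. \<forall>v\<in>W. mat_vec B v \<in> W)"

definition irreducible_T_module :: "('a::finite \<Rightarrow> 'a \<Rightarrow> bool) \<Rightarrow> 'a \<Rightarrow> ('a \<Rightarrow> complex) set \<Rightarrow> bool" where
  "irreducible_T_module E x W \<longleftrightarrow> T_module E x W \<and> W \<noteq> {\<lambda>_. 0} \<and>
     (\<forall>U. T_module E x U \<longrightarrow> U \<subseteq> W \<longrightarrow> U = {\<lambda>_. 0} \<or> U = W)"

end

theory Submission
  imports Defs
begin

lemma walk_append: "walk E m x y \<Longrightarrow> walk E n y z \<Longrightarrow> walk E (m+n) x z"
  by (induction rule: walk.induct) (auto intro: walk.intros)

lemma walk_sym: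
  assumes "simple_graph E" shows "walk E n x y \<Longrightarrow> walk E n y x"
proof (induction rule: walk.induct)
  case (walk0 x) then show ?case by (rule walk.walk0)
next
  case (walkS x y n z)
  have "E y x" using walkS(1) assms by (auto simp: simple_graph_def)
  then have "walk E 1 y x" by (auto intro: walk.intros)
  from walk_append[OF walkS(3) this] show ?case by simp
qed

lemma walk_split: "walk E (m+n) x z \<Longrightarrow> \<exists>y. walk E m x y \<and> walk E n y z"
proof (induction m arbitrary: x)
  case 0 then show ?case by (auto intro: walk.intros)
next
  case (Suc m)
  from Suc.prems obtain y where "E x y" "walk E (m+n) y z"
    by (auto elim: walk.cases)
  with Suc.IH obtain w where "walk E m y w" "walk E n w z" by blast
  with \<open>E x y\<close> show ?case by (auto intro: walk.intros)
qed

lemma gdist_walk: "connected_graph E \<Longrightarrow> walk E (gdist E x y) x y"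
  unfolding gdist_def connected_graph_def by (metis LeastI)

lemma gdist_le: "walk E n x y \<Longrightarrow> gdist E x y \<le> n"
  unfolding gdist_def by (rule Least_le)

lemma gdist_sym: "simple_graph E \<Longrightarrow> connected_graph E \<Longrightarrow> gdist E x y = gdist E y x"
  by (meson antisym gdist_le gdist_walk walk_sym)

lemma gdist_tri: "connected_graph E \<Longrightarrow> gdist E x z \<le> gdist E x y + gdist E y z"
  by (meson gdist_le gdist_walk walk_append)

lemma gdist_diam: "gdist E x y \<le> diameter (E::'a::finite \<Rightarrow> 'a \<Rightarrow> bool)"
proof -
  have "{gdist E x y | x y. True} = (\<lambda>(x,y). gdist E x y) ` UNIV" by auto
  then have "finite {gdist E x y | x y. True}" by simp
  then show ?thesis unfolding diameter_def by (rule Max_ge) blast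
qed

lemma dr_card:
  assumes "distance_regular E" "gdist E x y = h" "gdist E x' y' = h"
  shows "card {z. gdist E x z = i \<and> gdist E y z = j} =
        card {z. gdist E x' z = i \<and> gdist E y' z = j}"
  using assms unfolding distance_regular_def by blast

lemma antipode_dist:
  fixes E :: "'a::finite \<Rightarrow> 'a \<Rightarrow> bool"
  assumes adc: "antipodal_double_cover E" and xh: "gdist E x xh = diameter E"
  shows "gdist E z xh = diameter E - gdist E x z"
proof -
  define D where "D = diameter E"
  define i where "i = gdist E x z"
  have dr: "distance_regular E" using adc by (simp add: antipodal_double_cover_def)
  have con: "connected_graph E" using dr by (simp add: distance_regular_def)
  have uniq: "\<And>w. gdist E x w = D \<Longrightarrow> w = xh"
  proof -
    fix w assume w: "gdist E x w = D"
    have "\<exists>!y. gdist E x y = diameter E"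
      using adc unfolding antipodal_double_cover_def by blast
    then show "w = xh" using w xh unfolding D_def by blast
  qed
  have iD: "i \<le> D" unfolding i_def D_def by (rule gdist_diam)
  have "walk E D x xh" using gdist_walk[OF con, of x xh] xh D_def by simp
  then have "walk E (i + (D - i)) x xh" using iD by simp
  then obtain z0 where w1: "walk E i x z0" and w2: "walk E (D-i) z0 xh"
    using walk_split[of E i "D - i" x xh] by blast
  have a: "gdist E x z0 \<le> i" using gdist_le[OF w1] .
  have b: "gdist E z0 xh \<le> D - i" using gdist_le[OF w2] .
  have c: "D \<le> gdist E x z0 + gdist E z0 xh" using gdist_tri[OF con, of x xh z0] xh D_def by simp
  have e1: "gdist E x z0 = i" and e2: "gdist E z0 xh = D - i" using a b c iD by auto
  have "card {w. gdist E x w = D \<and> gdist E z0 w = D - i} =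
        card {w. gdist E x w = D \<and> gdist E z w = D - i}"
    using dr_card[of E x z0 i x z D "D - i", OF dr e1 i_def[symmetric]] by simp

  moreover have "{w. gdist E x w = D \<and> gdist E z0 w = D - i} = {xh}"
  proof (rule set_eqI, rule iffI)
    fix w assume "w \<in> {w. gdist E x w = D \<and> gdist E z0 w = D - i}"
    then show "w \<in> {xh}" using uniq by blast
  next
    fix w assume "w \<in> {xh}"
    then have "w = xh" by simp
    then show "w \<in> {w. gdist E x w = D \<and> gdist E z0 w = D - i}"
      using e2 xh unfolding D_def by simp
  qed
  ultimately have "card {w. gdist E x w = D \<and> gdist E z w = D - i} = 1" by simp
  then obtain w where "gdist E x w = D" "gdist E z w = D - i"
    by (metis (mono_tags, lifting) card.empty empty_Collect_eq zero_neq_one)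
  then show ?thesis using uniq D_def i_def by auto
qed

lemma alg_sub:
  fixes E :: "'a::finite \<Rightarrow> 'a \<Rightarrow> bool"
  assumes h: "\<And>y. gdist E xh y = diameter E - gdist E x y"
  shows "M \<in> terwilliger_alg E x \<Longrightarrow> M \<in> terwilliger_alg E xh"
proof (induction rule: terwilliger_alg.induct)
  case (gen_E i)
  have "dual_idem E x i = dual_idem E xh (diameter E - i)"
    unfolding dual_idem_def
  proof (intro ext)
    fix y z
    have "gdist E x y \<le> diameter E" by (rule gdist_diam)
    then have "(gdist E x y = i) = (gdist E xh y = diameter E - i)"
      using h[of y] gen_E by auto
    then show "(if y = z \<and> gdist E x y = i then 1 else 0) =
      (if y = z \<and> gdist E xh y = diameter E - i then (1::complex) else 0)" by simp
  qed
  then show ?case by (simp add: terwilliger_alg.gen_E)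
next
  case gen_A show ?case by (rule terwilliger_alg.gen_A)
next
  case gen_I show ?case by (rule terwilliger_alg.gen_I)
next
  case (add M N) show ?case by (rule terwilliger_alg.add[OF add.IH])
next
  case (smult M c) show ?case by (rule terwilliger_alg.smult[OF smult.IH])
next
  case (mult M N) show ?case by (rule terwilliger_alg.mult[OF mult.IH])
qed

theorem lemma6p1:
  fixes E :: "'a::finite \<Rightarrow> 'a \<Rightarrow> bool"
    and x xh :: 'a
    and W :: "('a \<Rightarrow> complex) set"
  assumes "antipodal_double_cover E"
    and "diameter E \<ge> 3"
    and "gdist E x xh = diameter E"
  shows "irreducible_T_module E x W \<longleftrightarrow> irreducible_T_module E xh W"
proof -
  have dr: "distance_regular E" using assms(1) by (simp add: antipodal_double_cover_def)
  have sg: "simple_graph E" and con: "connected_graph E" using dr by (auto simp: distance_regular_def)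
  have xhx: "gdist E xh x = diameter E" using assms(3) gdist_sym[OF sg con] by simp
  have h1: "\<And>y. gdist E xh y = diameter E - gdist E x y"
    using antipode_dist[OF assms(1) assms(3)] gdist_sym[OF sg con] by metis
  have h2: "\<And>y. gdist E x y = diameter E - gdist E xh y"
    using antipode_dist[OF assms(1) xhx] gdist_sym[OF sg con] by metis
  have "terwilliger_alg E x = terwilliger_alg E xh"
    using alg_sub[of E xh x, OF h1] alg_sub[of E x xh, OF h2] by blast
  then show ?thesis unfolding irreducible_T_module_def T_module_def by simp
qed

end
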